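(* In the off-critical regime ($L\gg1$, $L^{-d/(d+1)}\ll\phi\ll1$) or the critical regime ($\phi=\xi L^{-d/(d+1)}$, $L\gg1$), there exist constants $C,R_0<\infty$ such that for any $R\ge R_0$ and $r_\eta\in[R,r_+]$, $$\int_\Omega v_R(|x|-r_\eta)\,dx=L^d(-1+\phi\eta)+r_\eta^{d-2}\big(C_1+O(e^{-R/C})\big)+\epsilon,$$ where $C_1=(d-1)\sigma_d\int_{-\infty}^\infty(\mathrm{sgn}(\xi)+v(\xi))\xi\,d\xi>0$ and $\epsilon=O(e^{-R/C})$ for $d=2,3$, $\epsilon=O(r_\eta^{d-4})$ for $d\ge4$. Consequently, the constant $\alpha(\eta)$ for which $u_\eta(x)=v_R(|x|-r_\eta)+\alpha(\eta)$ belongs to $X_\phi$ satisfies $$\alpha(\eta)=\phi(1-\eta)-\frac{C_1}{L^d}r_\eta^{d-2}\big(1+O(e^{-R/C})\big)-\frac1{L^d}O(r_\eta^{d-4}).$$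
   Context: $\Omega=[-L/2,L/2]^d$ flat torus, $d\ge2$, $|x|$ the Euclidean norm of $x\in[-L/2,L/2]^d$; $X_\phi=\{u\in H^1\cap L^4(\Omega):\frac1{L^d}\int_\Omega u=-1+\phi\}$. $\sigma_d$ = surface area of $S^{d-1}$. $v(x)=-\tanh(x/\sqrt2)$; $v_R$ is an odd function with $v_R=v$ on $|x|<R$, $v_R=-\mathrm{sgn}(x)$ for $|x|>2R$, smooth monotone interpolation on $R\le|x|\le2R$. For $\eta\in[0,1]$, $r_\eta=\eta^{1/d}(\phi d/(2\sigma_d))^{1/d}L$, and $r_+$ is the radius of the ball of volume $V_+=\phi L^d/2$ (i.e. $r_+=r_1$). The $O(\cdot)$ constants are independent of $R,\eta,\phi,L$. *)

theory Defs
  imports "HOL-Analysis.Analysis"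
begin

definition vprof :: "real \<Rightarrow> real" where
  "vprof x = - tanh (x / sqrt 2)"

definition sigma_d :: "nat \<Rightarrow> real" where
  "sigma_d d = 2 * pi powr (real d / 2) / Gamma (real d / 2)"

text \<open>The flat torus Omega = [-L/2, L/2]^d, represented by its fundamental box.\<close>
definition torus_box :: "real \<Rightarrow> 'a::euclidean_space set" where
  "torus_box L = cbox (- ((L / 2) *\<^sub>R One)) ((L / 2) *\<^sub>R One)"

definition C1 :: "nat \<Rightarrow> real" where
  "C1 d = (real d - 1) * sigma_d d * integral UNIV (\<lambda>t. (sgn t + vprof t) * t)"

definition r_eta :: "nat \<Rightarrow> real \<Rightarrow> real \<Rightarrow> real \<Rightarrow> real" where
  "r_eta d L \<phi> \<eta> = \<eta> powr (1 / real d) * (\<phi> * real d / (2 * sigma_d d)) powr (1 / real d) * L"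

definition admissible_vR :: "(real \<Rightarrow> real \<Rightarrow> real) \<Rightarrow> bool" where
  "admissible_vR vR \<longleftrightarrow> (\<forall>R>0.
      (\<forall>x. vR R (- x) = - vR R x)
    \<and> (\<forall>x. \<bar>x\<bar> < R \<longrightarrow> vR R x = vprof x)
    \<and> (\<forall>x. \<bar>x\<bar> > 2 * R \<longrightarrow> vR R x = - sgn x)
    \<and> (\<forall>k x. (deriv ^^ k) (vR R) differentiable (at x))
    \<and> (\<forall>x y. R \<le> x \<longrightarrow> x \<le> y \<longrightarrow> y \<le> 2 * R \<longrightarrow> vR R y \<le> vR R x))"

end

theory Submission
  imports Defs "HOL-Real_Asymp.Real_Asymp"
begin


lemma radial_fubini:
  fixes h h' :: "real \<Rightarrow> real" and M :: real
  assumes M: "M \<ge> 0"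
    and hd: "\<And>t. (h has_real_derivative h' t) (at t)"
    and hc: "continuous_on UNIV h'"
  shows "integrable lborel (\<lambda>x::'a::euclidean_space. indicator (cball 0 M) x * (h (norm x) - h M))"
    and "(\<integral>x. indicator (cball 0 M) x * (h (norm x) - h M) \<partial>(lborel::'a measure))
         = - unit_ball_vol DIM('a) * integral {0..M} (\<lambda>t. h' t * t ^ DIM('a))"
proof -
  define A :: "('a \<times> real) set" where "A = {p. norm (fst p) \<le> snd p \<and> snd p \<le> M}"
  define F where "F = (\<lambda>(x::'a) (t::real). indicator A (x,t) * h' t)"
  have Acl: "closed A" unfolding A_def
    by (intro closed_Collect_conj closed_Collect_le continuous_intros)
  have Asets[measurable]: "A \<in> sets borel" using Acl by (simp add: borel_closed)
  have Abd: "bounded A"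
  proof -
    have "A \<subseteq> cball 0 M \<times> cball 0 M" unfolding A_def by (auto simp: dist_norm) (smt (verit) norm_ge_zero)
    thus ?thesis using bounded_Times[OF bounded_cball bounded_cball] bounded_subset by blast
  qed
  have h'meas[measurable]: "h' \<in> borel_measurable borel"
    using hc by (simp add: borel_measurable_continuous_onI)
  obtain B where B: "\<And>t. t \<in> {0..M} \<Longrightarrow> norm (h' t) \<le> B"
    using compact_imp_bounded[OF compact_continuous_image[OF continuous_on_subset[OF hc] compact_Icc]]
    unfolding bounded_iff by blast
  have intF: "integrable (lborel \<Otimes>\<^sub>M lborel) (case_prod F)"
    unfolding lborel_prod
  proof (rule integrableI_bounded_set[where A=A and B=B])
    show "A \<in> sets lborel" by simp
    have e: "case_prod F = (\<lambda>p. indicator A p * h' (snd p))" by (auto simp: F_def)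
    have "(\<lambda>p::'a\<times>real. h' (snd p)) \<in> borel_measurable borel"
      by (intro borel_measurable_continuous_onI continuous_on_compose2[OF hc] continuous_intros) auto
    then show "case_prod F \<in> borel_measurable lborel" unfolding e
      by (intro borel_measurable_times) (auto simp: measurable_lborel1)
    show "emeasure lborel A < \<infinity>" using emeasure_bounded_finite[OF Abd] by simp
    show "AE x in lborel. x \<in> A \<longrightarrow> norm (case_prod F x) \<le> B"
    proof (intro AE_I2 impI)
      fix p :: "'a \<times> real" assume "p \<in> A"
      then have "snd p \<in> {0..M}" unfolding A_def by (auto intro: order.trans[OF norm_ge_zero])
      then show "norm (case_prod F p) \<le> B" using B[of "snd p"] \<open>p \<in> A\<close>
        by (cases p) (auto simp: F_def)
    qed
    show "AE x in lborel. x \<notin> A \<longrightarrow> case_prod F x = 0" by (auto simp: F_def)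
  qed
  have inner_t: "(\<integral>t. F x t \<partial>lborel) = indicator (cball 0 M) x * (h M - h (norm x))" for x :: 'a
  proof (cases "norm x \<le> M")
    case True
    have "(\<integral>t. F x t \<partial>lborel) = (\<integral>t. indicator {norm x..M} t *\<^sub>R h' t \<partial>lborel)"
      by (intro Bochner_Integration.integral_cong) (auto simp: F_def A_def split: split_indicator)
    also have "\<dots> = h M - h (norm x)"
      using True
      by (intro integral_FTC_atLeastAtMost continuous_on_subset[OF hc])
         (auto intro: has_field_derivative_imp_has_derivative has_real_derivative_iff_has_vector_derivative[THEN iffD1] hd
               has_vector_derivative_at_within)
    finally show ?thesis using True by (simp add: dist_norm)
  next
    case False
    then have "F x t = 0" for t by (auto simp: F_def A_def indicator_def)
    then show ?thesis using False by (simp add: dist_norm)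
  qed
  have inner_x: "(\<integral>x. F x t \<partial>lborel) = indicator {0..M} t * (h' t * unit_ball_vol DIM('a) * t ^ DIM('a))" for t
  proof (cases "t \<in> {0..M}")
    case True
    have "(\<integral>x. F x t \<partial>lborel) = (\<integral>x. indicator (cball (0::'a) t) x * h' t \<partial>lborel)"
      using True by (intro Bochner_Integration.integral_cong) (auto simp: F_def A_def split: split_indicator)
    also have "\<dots> = measure lborel (cball (0::'a) t) * h' t"
      by simp
    also have "measure lborel (cball (0::'a) t) = unit_ball_vol DIM('a) * t ^ DIM('a)"
      using True content_cball[of t "0::'a"] by simp
    finally show ?thesis using True by simp
  next
    case False
    then have "F x t = 0" for x :: 'a by (auto simp: F_def A_def indicator_def) (smt (verit) norm_ge_zero)
    then show ?thesis using False by simp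
  qed
  have intx: "integrable lborel (\<lambda>x::'a. \<integral>t. F x t \<partial>lborel)"
    using lborel_pair.integrable_fst'[OF intF] by simp
  show int1: "integrable lborel (\<lambda>x::'a. indicator (cball 0 M) x * (h (norm x) - h M))"
    using integrable_minus[OF intx] unfolding inner_t by (simp add: algebra_simps)
  have "(\<integral>x. indicator (cball 0 M) x * (h (norm x) - h M) \<partial>(lborel::'a measure))
       = - (\<integral>x. (\<integral>t. F x t \<partial>lborel) \<partial>lborel)"
    unfolding inner_t by (simp add: algebra_simps flip: integral_minus)
  also have "(\<integral>x. (\<integral>t. F x t \<partial>lborel) \<partial>lborel) = (\<integral>t. (\<integral>x. F x t \<partial>lborel) \<partial>lborel)"
    using lborel_pair.Fubini_integral[OF intF] by simp
  also have "\<dots> = (\<integral>t. indicator {0..M} t *\<^sub>R (h' t * unit_ball_vol DIM('a) * t ^ DIM('a)) \<partial>lborel)"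
    unfolding inner_x by simp
  also have "\<dots> = integral {0..M} (\<lambda>t. h' t * unit_ball_vol DIM('a) * t ^ DIM('a))"
  proof -
    have "continuous_on {0..M} (\<lambda>t. h' t * unit_ball_vol DIM('a) * t ^ DIM('a))"
      by (intro continuous_intros continuous_on_subset[OF hc]) auto
    then show ?thesis using set_borel_integral_eq_integral(2)[OF borel_integrable_atLeastAtMost'[of 0 M "\<lambda>t. h' t * unit_ball_vol DIM('a) * t ^ DIM('a)"]]
      by (auto simp: set_lebesgue_integral_def)
  qed
  also have "\<dots> = unit_ball_vol DIM('a) * integral {0..M} (\<lambda>t. h' t * t ^ DIM('a))"
    by (simp add: mult.commute mult.left_commute flip: integral_mult_right)
  finally show "(\<integral>x. indicator (cball 0 M) x * (h (norm x) - h M) \<partial>(lborel::'a measure))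
         = - unit_ball_vol DIM('a) * integral {0..M} (\<lambda>t. h' t * t ^ DIM('a))" by simp
qed



lemma pow_le_exp:
  fixes x :: real assumes "x \<ge> 0"
  shows "x ^ n \<le> real n ^ n * exp x"
proof (cases "n = 0")
  case True then show ?thesis using assms by simp
next
  case False
  have "(x / real n) ^ n \<le> (1 + x / real n) ^ n"
    using assms by (intro power_mono) auto
  also have "\<dots> \<le> exp x"
    using assms False by (intro exp_ge_one_plus_x_over_n_power_n) auto
  finally have "x ^ n / real n ^ n \<le> exp x" by (simp add: power_divide)
  then show ?thesis using False by (simp add: field_simps)
qed

lemma vprof_bounds:
  fixes s :: real assumes "s \<ge> 0"
  shows "0 \<le> 1 + vprof s" "1 + vprof s \<le> 2 * exp (- s)"
proof -
  show "0 \<le> 1 + vprof s" unfolding vprof_def using tanh_real_lt_1[of "s / sqrt 2"] by simp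
  define x where "x = s / sqrt 2"
  have "1 + vprof s = 1 - tanh x" unfolding vprof_def x_def by simp
  also have "\<dots> = 2 * exp (-2 * x) / (1 + exp (-2 * x))"
  proof -
    have "1 + exp (-2 * x) > 0" by (simp add: add_pos_pos)
    then show ?thesis unfolding tanh_real_altdef by (simp add: field_simps)
  qed
  also have "\<dots> \<le> 2 * exp (-2 * x)"
    by (simp add: divide_le_eq add_pos_pos)
  also have "\<dots> \<le> 2 * exp (- s)"
  proof -
    have "2 * x = sqrt 2 * s" unfolding x_def by (simp add: field_simps real_sqrt_mult[symmetric])
    also have "\<dots> \<ge> s" using assms by (simp add: mult_le_cancel_right1)
    finally show ?thesis by simp
  qed
  finally show "1 + vprof s \<le> 2 * exp (- s)" .
qed

lemma vprof_cont: "continuous_on S vprof"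
  unfolding vprof_def by (intro continuous_intros) (auto simp: cosh_real_pos)

lemma vprof_mono: "x \<le> y \<Longrightarrow> vprof y \<le> vprof x"
  unfolding vprof_def by (simp add: divide_right_mono)

lemma vprof_ge: "vprof x \<ge> -1"
  unfolding vprof_def using tanh_real_lt_1[of "x / sqrt 2"] by simp

lemma vprof_odd: "vprof (-x) = - vprof x"
  unfolding vprof_def by simp

lemma g_tail:
  fixes a :: real assumes "a \<ge> 0"
  shows "((\<lambda>s. 2 * s * exp (- s)) has_integral (2 * (a + 1) * exp (- a))) {a..}"
proof (rule has_integral_to_inf)
  show "(\<lambda>s. 2 * s * exp (- s)) integrable_on {a..y}" for y
    by (intro integrable_continuous_interval continuous_intros)
  show "0 \<le> 2 * y * exp (- y)" if "a \<le> y" for y using that assms by simp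
  have "((\<lambda>s. 2 * s * exp (- s)) has_integral (2 * (a + 1) * exp (- a) - 2 * (y + 1) * exp (- y))) {a..y}"
    if "a \<le> y" for y
  proof -
    have d: "((\<lambda>s. -2 * (s + 1) * exp (- s)) has_vector_derivative (2 * s * exp (- s))) (at s within {a..y})" for s
      unfolding has_real_derivative_iff_has_vector_derivative[symmetric]
      by (auto intro!: derivative_eq_intros simp: algebra_simps)
    from fundamental_theorem_of_calculus[OF that d] show ?thesis by (simp add: algebra_simps)
  qed
  then have "\<forall>\<^sub>F y in at_top. integral {a..y} (\<lambda>s. 2 * s * exp (- s)) = 2 * (a + 1) * exp (- a) - 2 * (y + 1) * exp (- y)"
    using eventually_at_top_linorder by (auto intro!: exI[of _ a] integral_unique)
  moreover have "((\<lambda>y::real. 2 * (a + 1) * exp (- a) - 2 * (y + 1) * exp (- y)) \<longlongrightarrow> 2 * (a + 1) * exp (- a)) at_top"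
    by real_asymp
  ultimately show "((\<lambda>y. integral {a..y} (\<lambda>s. 2 * s * exp (- s))) \<longlongrightarrow> 2 * (a + 1) * exp (- a)) at_top"
    by (simp add: filterlim_cong tendsto_cong)
qed

definition f0 :: "real \<Rightarrow> real" where "f0 s = (1 + vprof s) * s"

lemma f0_cont: "continuous_on S f0"
  unfolding f0_def by (intro continuous_intros vprof_cont)

lemma f0_tail:
  fixes a :: real assumes "a \<ge> 0"
  shows "f0 integrable_on {a..}" "0 \<le> integral {a..} f0" "integral {a..} f0 \<le> 2 * (a + 1) * exp (- a)"
    and "f0 absolutely_integrable_on {a..}"
proof -
  have bnd: "norm (f0 s) \<le> 2 * s * exp (- s)" if "s \<in> {a..}" for s
  proof -
    have s: "s \<ge> 0" using that assms by auto
    have "norm (f0 s) = (1 + vprof s) * s" unfolding f0_def using vprof_bounds(1)[OF s] s by simp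
    also have "\<dots> \<le> 2 * exp (- s) * s" using vprof_bounds(2)[OF s] s by (intro mult_right_mono) auto
    finally show ?thesis by (simp add: mult_ac)
  qed
  show ai: "f0 absolutely_integrable_on {a..}"
    by (rule measurable_bounded_by_integrable_imp_absolutely_integrable[OF
          continuous_imp_measurable_on_sets_lebesgue[OF f0_cont] _ has_integral_integrable[OF g_tail[OF assms]] bnd])
       auto
  then show int: "f0 integrable_on {a..}" using ai set_lebesgue_integral_eq_integral(1) by blast
  show "0 \<le> integral {a..} f0"
    using int assms by (intro integral_nonneg) (auto simp: f0_def intro!: mult_nonneg_nonneg vprof_bounds(1))
  have "integral {a..} f0 \<le> integral {a..} (\<lambda>s. 2 * s * exp (- s))"
    using bnd int g_tail[OF assms] by (intro integral_le) (auto simp: abs_le_iff)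
  then show "integral {a..} f0 \<le> 2 * (a + 1) * exp (- a)"
    using g_tail[OF assms] integral_unique by metis
qed



lemma adm_facts:
  assumes adm: "admissible_vR vR" and R: "R > 0"
  defines "u \<equiv> vR R"
  shows "\<And>x. (u has_real_derivative deriv u x) (at x)"
    and "continuous_on UNIV (deriv u)"
    and "\<And>x. u (- x) = - u x"
    and "\<And>x. \<bar>x\<bar> \<le> R \<Longrightarrow> u x = vprof x"
    and "\<And>x. x \<ge> 2 * R \<Longrightarrow> u x = -1"
    and "\<And>x. R \<le> x \<Longrightarrow> x \<le> 2 * R \<Longrightarrow> -1 \<le> u x \<and> u x \<le> vprof R"
proof -
  have A: "\<forall>x. u (- x) = - u x" "\<forall>x. \<bar>x\<bar> < R \<longrightarrow> u x = vprof x"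
    "\<forall>x. \<bar>x\<bar> > 2 * R \<longrightarrow> u x = - sgn x" "\<forall>k x. (deriv ^^ k) u differentiable (at x)"
    "\<forall>x y. R \<le> x \<longrightarrow> x \<le> y \<longrightarrow> y \<le> 2 * R \<longrightarrow> u y \<le> u x"
    using adm R unfolding admissible_vR_def u_def by blast+
  have diff: "u differentiable (at x)" for x using A(4) spec[OF spec[OF A(4)], of 0 x] by simp
  show der: "(u has_real_derivative deriv u x) (at x)" for x
    using diff by (simp add: DERIV_deriv_iff_real_differentiable)
  have "deriv u differentiable (at x)" for x using spec[OF spec[OF A(4)], of 1 x] by simp
  then show "continuous_on UNIV (deriv u)"
    by (simp add: continuous_at_imp_continuous_on differentiable_imp_continuous_within)
  show "u (- x) = - u x" for x using A(1) by blast
  have ucont: "isCont u x" for x using der by (rule DERIV_isCont)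
  show uv: "u x = vprof x" if "\<bar>x\<bar> \<le> R" for x
  proof (cases "\<bar>x\<bar> < R")
    case True then show ?thesis using A(2) by blast
  next
    case False
    then have ax: "\<bar>x\<bar> = R" using that by simp
    have tx: "((\<lambda>t. t * x) \<longlongrightarrow> x) (at_left 1)"
      using tendsto_mult[OF tendsto_ident_at[of 1 "{..<1}"] tendsto_const[of x]] by simp
    have lim1: "((\<lambda>t. u (t * x)) \<longlongrightarrow> u x) (at_left 1)"
      using isCont_tendsto_compose[OF ucont[of x] tx] .
    have lim2: "((\<lambda>t. vprof (t * x)) \<longlongrightarrow> vprof x) (at_left 1)"
      using isCont_tendsto_compose[OF _ tx, of vprof] vprof_cont[of UNIV]
      by (simp add: continuous_on_eq_continuous_at)
    have ev: "eventually (\<lambda>t. u (t * x) = vprof (t * x)) (at_left (1::real))"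
    proof -
      have "eventually (\<lambda>t. t \<in> {0<..<1}) (at_left (1::real))"
        by (intro eventually_at_leftI[of 0]) auto
      then show ?thesis
      proof (rule eventually_mono)
        fix t :: real assume "t \<in> {0<..<1}"
        then have "\<bar>t * x\<bar> < R" using ax R by (auto simp: abs_mult)
        then show "u (t * x) = vprof (t * x)" using A(2) by blast
      qed
    qed
    have "((\<lambda>t. u (t * x)) \<longlongrightarrow> vprof x) (at_left 1)"
      using lim2 ev by (simp add: tendsto_cong)
    then show ?thesis using lim1 tendsto_unique[OF trivial_limit_at_left_real] by blast
  qed
  show u2: "u x = -1" if "x \<ge> 2 * R" for x
  proof (cases "x > 2 * R")
    case True then show ?thesis using A(3) R by auto
  next
    case False
    then have x: "x = 2 * R" using that by simp
    have lim1: "(u \<longlongrightarrow> u x) (at_right x)"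
      using ucont[of x] unfolding isCont_def by (rule filterlim_mono) (simp_all add: at_le)
    have ev: "eventually (\<lambda>t. u t = -1) (at_right x)"
    proof -
      have "eventually (\<lambda>t. t \<in> {x<..<x+1}) (at_right x)"
        by (intro eventually_at_rightI[of x]) auto
      then show ?thesis by (rule eventually_mono) (use A(3) x R in auto)
    qed
    have "(u \<longlongrightarrow> -1) (at_right x)"
      using ev by (simp add: tendsto_eventually)
    then show ?thesis using lim1 tendsto_unique[OF trivial_limit_at_right_real] by blast
  qed
  show "-1 \<le> u x \<and> u x \<le> vprof R" if "R \<le> x" "x \<le> 2 * R" for x
  proof
    have "u (2 * R) \<le> u x" using A(5) that by blast
    then show "-1 \<le> u x" using u2[of "2 * R"] by simp
    have "u x \<le> u R" using A(5) that by blast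
    then show "u x \<le> vprof R" using uv[of R] R by simp
  qed
qed



definition K0 :: real where "K0 = integral {0..} f0"

lemma K0_split:
  fixes a :: real assumes "a \<ge> 0"
  shows "K0 = integral {0..a} f0 + integral {a..} f0"
proof -
  have "(f0 has_integral (integral {0..a} f0 + integral {a..} f0)) ({0..a} \<union> {a..})"
    by (intro has_integral_Un integrable_integral f0_tail(1) assms integrable_continuous_interval f0_cont)
       (auto intro: negligible_subset[of "{a}"])
  moreover have "{0..a} \<union> {a..} = {0::real..}" using assms by auto
  ultimately show ?thesis unfolding K0_def by (simp add: integral_unique)
qed

lemma K0_pos: "K0 > 0"
proof -
  define c where "c = 1 + vprof 1"
  have c: "c > 0" unfolding c_def vprof_def using tanh_real_lt_1[of "1 / sqrt 2"] by simp
  have "integral {0..1} (\<lambda>s. c * s) \<le> integral {0..1} f0"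
  proof (intro integral_le integrable_continuous_interval f0_cont continuous_intros)
    fix s :: real assume "s \<in> {0..1}"
    then show "c * s \<le> f0 s" unfolding f0_def c_def
      by (intro mult_right_mono) (auto intro: vprof_mono)
  qed
  moreover have "integral {0..1} (\<lambda>s. c * s) = c / 2"
  proof -
    have "((\<lambda>s. c * s) has_integral (c * (1 ^ 2 / 2) - c * (0 ^ 2 / 2))) {0..1::real}"
      by (intro fundamental_theorem_of_calculus)
         (auto intro!: derivative_eq_intros simp flip: has_real_derivative_iff_has_vector_derivative)
    then show ?thesis by (simp add: integral_unique)
  qed
  ultimately have "c / 2 \<le> integral {0..1} f0" by simp
  then show ?thesis using K0_split[of 1] f0_tail(2)[of 1] c by simp
qed

lemma C1_eq: "C1 d = (real d - 1) * sigma_d d * (2 * K0)"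
proof -
  define F where "F = (\<lambda>t::real. (sgn t + vprof t) * t)"
  have Fabs: "F t = f0 \<bar>t\<bar>" for t
    by (cases "t > 0"; cases "t = 0") (auto simp: F_def f0_def vprof_odd abs_if algebra_simps)
  have ai: "f0 absolutely_integrable_on {0..}" using f0_tail(4)[of 0] by simp
  have r: "(\<lambda>x. f0 (-x)) absolutely_integrable_on {..0} \<and> integral {..0} (\<lambda>x. f0 (-x)) = K0"
    by (subst has_absolute_integral_reflect_real[where B="{0..}"]) (auto simp: K0_def ai)
  have h1: "(F has_integral K0) {..0}"
  proof -
    have "((\<lambda>x. f0 (-x)) has_integral K0) {..0}"
      using r unfolding absolutely_integrable_on_def by (metis integrable_integral)
    then show ?thesis by (rule has_integral_spike_eq[where S="{}", THEN iffD1, rotated 2]) (auto simp: Fabs)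
  qed
  have h2: "(F has_integral K0) {0..}"
  proof -
    have "(f0 has_integral K0) {0..}" unfolding K0_def using f0_tail(1)[of 0] by (simp add: integrable_integral)
    then show ?thesis by (rule has_integral_spike_eq[where S="{}", THEN iffD1, rotated 2]) (auto simp: Fabs)
  qed
  have "(F has_integral (K0 + K0)) ({..0} \<union> {0..})"
    by (intro has_integral_Un h1 h2) (auto intro: negligible_subset[of "{0}"])
  moreover have "{..0} \<union> {0..} = (UNIV :: real set)" by auto
  ultimately have "integral UNIV F = 2 * K0" by (simp add: integral_unique)
  then show ?thesis unfolding C1_def F_def by simp
qed



lemma kernel_bound:
  fixes r s :: real and n :: nat
  assumes s: "0 \<le> s" "s \<le> r"
  shows "\<bar>(r + s) ^ n - (r - s) ^ n - 2 * real n * r ^ (n - 1) * s\<bar>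
           \<le> (if n \<le> 2 then 0 else 2 ^ (n + 1) * s ^ 3 * r ^ (n - 3))"
proof (cases "n \<le> 2")
  case True
  then have "n = 0 \<or> n = 1 \<or> n = 2" by auto
  then show ?thesis
  proof (elim disjE)
    assume "n = 2" then show ?thesis by (simp add: power2_eq_square algebra_simps del: power_minus)
  qed auto
next
  case False
  define f where "f k = real (n choose k) * (1 - (-1) ^ k) * s ^ k * r ^ (n - k)" for k
  have "(r + s) ^ n - (r - s) ^ n = (\<Sum>k\<le>n. f k)"
  proof -
    have "(r + s) ^ n = (\<Sum>k\<le>n. real (n choose k) * s ^ k * r ^ (n - k))"
      using binomial_ring[of s r n] by (simp add: add.commute)
    moreover have "(r - s) ^ n = (\<Sum>k\<le>n. real (n choose k) * (- s) ^ k * r ^ (n - k))"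
    proof -
      have "(r - s) ^ n = (-s + r) ^ n" by simp
      also have "\<dots> = (\<Sum>k\<le>n. real (n choose k) * (- s) ^ k * r ^ (n - k))" by (rule binomial_ring)
      finally show ?thesis .
    qed
    ultimately have "(r + s) ^ n - (r - s) ^ n = (\<Sum>k\<le>n. real (n choose k) * s ^ k * r ^ (n - k) - real (n choose k) * (- s) ^ k * r ^ (n - k))"
      by (simp only: sum_subtractf)
    also have "\<dots> = (\<Sum>k\<le>n. f k)"
      unfolding f_def by (intro sum.cong refl) (simp add: power_minus[of s] algebra_simps)
    finally show ?thesis .
  qed
  also have "\<dots> = f 0 + f 1 + f 2 + (\<Sum>k\<in>{3..n}. f k)"
  proof -
    have "{..n} = {0..n}" by auto
    moreover have "sum f {0..n} = f 0 + (f 1 + (f 2 + sum f {3..n}))"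
    proof -
      have "sum f {0..n} = f 0 + sum f {Suc 0..n}" by (rule sum.atLeast_Suc_atMost) simp
      also have "sum f {Suc 0..n} = f (Suc 0) + sum f {Suc (Suc 0)..n}" using False by (intro sum.atLeast_Suc_atMost) simp
      also have "sum f {Suc (Suc 0)..n} = f (Suc (Suc 0)) + sum f {Suc (Suc (Suc 0))..n}" using False by (intro sum.atLeast_Suc_atMost) simp
      finally show ?thesis by (simp add: numeral_3_eq_3 numeral_2_eq_2)
    qed
    ultimately show ?thesis by simp
  qed
  finally have eq0: "(r + s) ^ n - (r - s) ^ n = f 0 + f 1 + f 2 + sum f {3..n}" .
  have "f 0 = 0" "f 1 = 2 * real n * r ^ (n - 1) * s" "f 2 = 0"
    by (auto simp: f_def)
  with eq0 have eq: "(r + s) ^ n - (r - s) ^ n - 2 * real n * r ^ (n - 1) * s = (\<Sum>k\<in>{3..n}. f k)"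
    by simp
  have "\<bar>\<Sum>k\<in>{3..n}. f k\<bar> \<le> (\<Sum>k\<in>{3..n}. 2 * real (n choose k) * (s ^ 3 * r ^ (n - 3)))"
  proof (rule order.trans[OF sum_abs sum_mono])
    fix k assume k: "k \<in> {3..n}"
    have "s ^ k * r ^ (n - k) = s ^ 3 * (s ^ (k - 3) * r ^ (n - k))"
      using k by (simp add: power_add[symmetric])
    also have "\<dots> \<le> s ^ 3 * (r ^ (k - 3) * r ^ (n - k))"
      using s by (intro mult_left_mono mult_right_mono power_mono) auto
    also have "r ^ (k - 3) * r ^ (n - k) = r ^ (n - 3)"
      using k by (simp add: power_add[symmetric])
    finally have le: "s ^ k * r ^ (n - k) \<le> s ^ 3 * r ^ (n - 3)" .
    have "\<bar>1 - (-1::real) ^ k\<bar> \<le> 2" by (cases "even k") auto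
    have p: "0 \<le> s ^ k * r ^ (n - k)" using s by simp
    have "\<bar>f k\<bar> = real (n choose k) * \<bar>1 - (-1::real) ^ k\<bar> * (s ^ k * r ^ (n - k))"
      unfolding f_def using s by (simp add: abs_mult mult.assoc)
    also have "\<dots> \<le> real (n choose k) * 2 * (s ^ k * r ^ (n - k))"
      using p \<open>\<bar>1 - (-1::real) ^ k\<bar> \<le> 2\<close> by (intro mult_right_mono mult_left_mono) auto
    finally have "\<bar>f k\<bar> \<le> real (n choose k) * 2 * (s ^ k * r ^ (n - k))" .
    also have "\<dots> \<le> real (n choose k) * 2 * (s ^ 3 * r ^ (n - 3))"
      using le by (intro mult_left_mono) auto
    finally show "\<bar>f k\<bar> \<le> 2 * real (n choose k) * (s ^ 3 * r ^ (n - 3))" by simp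
  qed
  also have "\<dots> = 2 * (s ^ 3 * r ^ (n - 3)) * (\<Sum>k\<in>{3..n}. real (n choose k))"
    by (simp add: sum_distrib_left mult_ac)
  also have "(\<Sum>k\<in>{3..n}. real (n choose k)) \<le> (\<Sum>k\<le>n. real (n choose k))"
    by (intro sum_mono2) auto
  also have "(\<Sum>k\<le>n. real (n choose k)) = 2 ^ n"
    using choose_row_sum[of n] by (metis of_nat_numeral of_nat_power of_nat_sum)
  finally have "\<bar>\<Sum>k\<in>{3..n}. f k\<bar> \<le> 2 * (s ^ 3 * r ^ (n - 3)) * 2 ^ n"
    using s by (simp add: mult_left_mono)
  then show ?thesis using False eq by (simp add: mult_ac)
qed



locale prof =
  fixes u u' :: "real \<Rightarrow> real" and R :: real
  assumes R1: "R \<ge> 1"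
    and uder: "\<And>x. (u has_real_derivative u' x) (at x)"
    and u'c: "continuous_on UNIV u'"
    and uodd: "\<And>x. u (- x) = - u x"
    and uv: "\<And>x. \<bar>x\<bar> \<le> R \<Longrightarrow> u x = vprof x"
    and u2: "\<And>x. x \<ge> 2 * R \<Longrightarrow> u x = -1"
    and umid: "\<And>x. R \<le> x \<Longrightarrow> x \<le> 2 * R \<Longrightarrow> -1 \<le> u x \<and> u x \<le> vprof R"
begin

lemma ucont: "continuous_on S u"
  using uder by (meson DERIV_isCont continuous_at_imp_continuous_on)

lemma w_bound:
  assumes "0 \<le> s" "s \<le> 2 * R"
  shows "0 \<le> u s + 1" "u s + 1 \<le> 2 * exp (- s / 2)"
proof -
  have "0 \<le> u s + 1 \<and> u s + 1 \<le> 2 * exp (- s / 2)"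
  proof (cases "s \<le> R")
    case True
    then have "u s = vprof s" using assms by (intro uv) auto
    moreover have "2 * exp (- s) \<le> 2 * exp (- s / 2)" using assms by simp
    ultimately show ?thesis using vprof_bounds[of s] assms by linarith
  next
    case False
    have "1 + vprof R \<le> 2 * exp (- R)" using vprof_bounds[of R] R1 by simp
    also have "\<dots> \<le> 2 * exp (- s / 2)" using assms by simp
    finally show ?thesis using umid[of s] assms False by auto
  qed
  then show "0 \<le> u s + 1" "u s + 1 \<le> 2 * exp (- s / 2)" by auto
qed

lemma w_bound_mid:
  assumes "R \<le> s" "s \<le> 2 * R"
  shows "\<bar>u s + 1\<bar> \<le> 2 * exp (- R)" "\<bar>u s - vprof s\<bar> \<le> 2 * exp (- R)"
proof -
  have b: "1 + vprof R \<le> 2 * exp (- R)" using vprof_bounds[of R] R1 by simp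
  have "vprof s \<le> vprof R" using assms by (intro vprof_mono)
  then show "\<bar>u s + 1\<bar> \<le> 2 * exp (- R)" "\<bar>u s - vprof s\<bar> \<le> 2 * exp (- R)"
    using umid[OF assms] vprof_ge[of s] b by auto
qed

lemma ucont_comp[continuous_intros]: "continuous_on S f \<Longrightarrow> continuous_on S (\<lambda>x. u (f x))"
  by (rule continuous_on_compose2[OF ucont[of UNIV]]) auto

lemma u'cont_comp[continuous_intros]: "continuous_on S f \<Longrightarrow> continuous_on S (\<lambda>x. u' (f x))"
  by (rule continuous_on_compose2[OF u'c]) auto

lemma oneD_identity:
  fixes d :: nat and r :: real
  assumes d: "d \<ge> 2" and rR: "R \<le> r"
  defines "c \<equiv> min r (2 * R)" and "n \<equiv> d - 1"
  shows "- integral {0..r + 2 * R} (\<lambda>t. u' (t - r) * t ^ d) - 2 * r ^ d =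
     real d * (2 * real n * r ^ (n - 1) * integral {0..2 * R} (\<lambda>s. (u s + 1) * s)
       + integral {0..c} (\<lambda>s. (u s + 1) * ((r + s) ^ n - (r - s) ^ n - 2 * real n * r ^ (n - 1) * s))
       + integral {c..2 * R} (\<lambda>s. (u s + 1) * ((r + s) ^ n - 2 * real n * r ^ (n - 1) * s)))"
proof -
  define M where "M = r + 2 * R"
  have R0: "R > 0" using R1 by simp
  have r0: "r > 0" using rR R0 by simp
  have dn: "d = Suc n" using d unfolding n_def by simp
  note int = integrable_continuous_interval
  have S1: "integral {0..M} (\<lambda>t. u' (t - r) * t ^ d) = - (M ^ d) - real d * integral {0..M} (\<lambda>t. u (t - r) * t ^ n)"
  proof -
    have der: "((\<lambda>t. u (t - r) * t ^ d) has_vector_derivative (u' (t - r) * t ^ d + real d * (u (t - r) * t ^ n))) (at t within {0..M})" for t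
    proof -
      have "((\<lambda>t. u (t - r)) has_real_derivative u' (t - r) * 1) (at t)"
        by (intro DERIV_chain2[OF uder] derivative_eq_intros) auto
      then have "((\<lambda>t. u (t - r) * t ^ d) has_real_derivative (u' (t - r) * 1) * t ^ d + u (t - r) * (real d * t ^ (d - 1))) (at t)"
        by (intro derivative_eq_intros) auto
      then show ?thesis unfolding has_real_derivative_iff_has_vector_derivative[symmetric] n_def
        by (auto intro: has_field_derivative_at_within simp: algebra_simps)
    qed
    have "M \<ge> 0" using r0 R0 unfolding M_def by simp
    from fundamental_theorem_of_calculus[OF this der]
    have "((\<lambda>t. u' (t - r) * t ^ d + real d * (u (t - r) * t ^ n)) has_integral (- (M ^ d))) {0..M}"
      using u2[of "2 * R"] d by (simp add: M_def zero_power)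
    then have "integral {0..M} (\<lambda>t. u' (t - r) * t ^ d + real d * (u (t - r) * t ^ n)) = - (M ^ d)"
      by (rule integral_unique)
    moreover have "integral {0..M} (\<lambda>t. u' (t - r) * t ^ d + real d * (u (t - r) * t ^ n))
        = integral {0..M} (\<lambda>t. u' (t - r) * t ^ d) + real d * integral {0..M} (\<lambda>t. u (t - r) * t ^ n)"
      by (subst integral_add) (auto intro!: int continuous_intros)
    ultimately show ?thesis by simp
  qed
  have pw: "integral {a..b} (\<lambda>t. t ^ n) = (b ^ d - a ^ d) / real d" if "a \<le> b" for a b :: real
  proof -
    have "((\<lambda>t. t ^ n) has_integral (b ^ d / real d - a ^ d / real d)) {a..b}"
    proof (intro fundamental_theorem_of_calculus that)
      fix t :: real
      have "((\<lambda>t. t ^ d / real d) has_real_derivative (real d * t ^ (d - Suc 0)) / real d) (at t)"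
        by (intro DERIV_cdivide DERIV_pow)
      then have "((\<lambda>t. t ^ d / real d) has_real_derivative t ^ n) (at t)"
        using d by (simp add: dn)
      then show "((\<lambda>t. t ^ d / real d) has_vector_derivative t ^ n) (at t within {a..b})"
        by (simp add: has_real_derivative_iff_has_vector_derivative[symmetric] has_field_derivative_at_within)
    qed
    then show ?thesis by (simp add: integral_unique diff_divide_distrib)
  qed
  have rM: "0 \<le> r" "r \<le> M" using r0 R0 unfolding M_def by auto
  define A1 where "A1 = integral {r..M} (\<lambda>t. (u (t - r) + 1) * t ^ n)"
  define A2 where "A2 = integral {0..r} (\<lambda>t. (u (t - r) - 1) * t ^ n)"
  have S2: "- integral {0..M} (\<lambda>t. u' (t - r) * t ^ d) - 2 * r ^ d = real d * (A1 + A2)"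
  proof -
    have c1: "integral {0..M} (\<lambda>t. u (t - r) * t ^ n) = integral {0..r} (\<lambda>t. u (t - r) * t ^ n) + integral {r..M} (\<lambda>t. u (t - r) * t ^ n)"
      using rM by (intro Henstock_Kurzweil_Integration.integral_combine[symmetric] int continuous_intros) auto
    have a1: "A1 = integral {r..M} (\<lambda>t. u (t - r) * t ^ n) + (M ^ d - r ^ d) / real d"
    proof -
      have "A1 = integral {r..M} (\<lambda>t. u (t - r) * t ^ n + t ^ n)"
        unfolding A1_def by (intro integral_cong) (simp add: algebra_simps)
      also have "\<dots> = integral {r..M} (\<lambda>t. u (t - r) * t ^ n) + integral {r..M} (\<lambda>t. t ^ n)"
        by (intro integral_add int continuous_intros)
      finally show ?thesis using pw[of r M] rM by simp
    qed
    have a2: "A2 = integral {0..r} (\<lambda>t. u (t - r) * t ^ n) - (r ^ d - 0 ^ d) / real d"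
    proof -
      have "A2 = integral {0..r} (\<lambda>t. u (t - r) * t ^ n - t ^ n)"
        unfolding A2_def by (intro integral_cong) (simp add: algebra_simps)
      also have "\<dots> = integral {0..r} (\<lambda>t. u (t - r) * t ^ n) - integral {0..r} (\<lambda>t. t ^ n)"
        by (intro integral_diff int continuous_intros)
      finally show ?thesis using pw[of 0 r] rM by simp
    qed
    show ?thesis unfolding S1 c1 a1 a2 using d by (simp add: field_simps zero_power)
  qed
  have S3a: "A1 = integral {0..2 * R} (\<lambda>s. (u s + 1) * (r + s) ^ n)"
  proof -
    have "integral {0..2 * R} ((\<lambda>t. (u (t - r) + 1) * t ^ n) \<circ> (+) r) = integral {0 + r..2 * R + r} (\<lambda>t. (u (t - r) + 1) * t ^ n)"
      by (rule integral_shift_Icc_real)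
    then show ?thesis unfolding A1_def M_def by (simp add: o_def add.commute)
  qed
  have S3b: "A2 = - integral {0..r} (\<lambda>s. (u s + 1) * (r - s) ^ n)"
  proof -
    have "integral {- r..0} ((\<lambda>t. (u (t - r) - 1) * t ^ n) \<circ> (+) r) = integral {- r + r..0 + r} (\<lambda>t. (u (t - r) - 1) * t ^ n)"
      by (rule integral_shift_Icc_real)
    then have "A2 = integral {- r..0} (\<lambda>s. (u s - 1) * (r + s) ^ n)"
      unfolding A2_def by (simp add: o_def add.commute)
    also have "\<dots> = integral {0..r} (\<lambda>s. (u (- s) - 1) * (r + - s) ^ n)"
      using Henstock_Kurzweil_Integration.integral_reflect_real[of 0 "-r" "\<lambda>s. (u s - 1) * (r + s) ^ n"] by simp
    also have "\<dots> = integral {0..r} (\<lambda>s. - ((u s + 1) * (r - s) ^ n))"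
      by (intro integral_cong) (simp add: uodd algebra_simps)
    finally show ?thesis by simp
  qed
  have S4: "integral {0..r} (\<lambda>s. (u s + 1) * (r - s) ^ n) = integral {0..c} (\<lambda>s. (u s + 1) * (r - s) ^ n)"
  proof (cases "r \<le> 2 * R")
    case True then show ?thesis by (simp add: c_def)
  next
    case False
    then have cc: "c = 2 * R" by (simp add: c_def)
    have "integral {0..r} (\<lambda>s. (u s + 1) * (r - s) ^ n) = integral {0..2 * R} (\<lambda>s. (u s + 1) * (r - s) ^ n) + integral {2 * R..r} (\<lambda>s. (u s + 1) * (r - s) ^ n)"
      using False R0 by (intro Henstock_Kurzweil_Integration.integral_combine[symmetric] int continuous_intros) auto
    also have "integral {2 * R..r} (\<lambda>s. (u s + 1) * (r - s) ^ n) = integral {2 * R..r} (\<lambda>s. 0)"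
      by (intro integral_cong) (auto simp: u2)
    finally show ?thesis using cc by simp
  qed
  have c0: "0 \<le> c" "c \<le> 2 * R" using r0 R0 by (auto simp: c_def)
  define E where "E = (\<lambda>s. 2 * real n * r ^ (n - 1) * s)"
  have split: "integral {0..2 * R} g = integral {0..c} g + integral {c..2 * R} g" if "continuous_on UNIV g" for g :: "real \<Rightarrow> real"
    using c0 by (intro Henstock_Kurzweil_Integration.integral_combine[symmetric] int continuous_on_subset[OF that]) auto
  have cg: "continuous_on UNIV (\<lambda>s. (u s + 1) * (r + s) ^ n)" "continuous_on UNIV (\<lambda>s. (u s + 1) * s)"
    by (intro continuous_intros)+
  have L1: "integral {0..c} (\<lambda>s. (u s + 1) * ((r + s) ^ n - (r - s) ^ n - 2 * real n * r ^ (n - 1) * s))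
     = integral {0..c} (\<lambda>s. (u s + 1) * (r + s) ^ n) - integral {0..c} (\<lambda>s. (u s + 1) * (r - s) ^ n)
       - 2 * real n * r ^ (n - 1) * integral {0..c} (\<lambda>s. (u s + 1) * s)"
  proof -
    have "integral {0..c} (\<lambda>s. (u s + 1) * ((r + s) ^ n - (r - s) ^ n - 2 * real n * r ^ (n - 1) * s))
       = integral {0..c} (\<lambda>s. ((u s + 1) * (r + s) ^ n - (u s + 1) * (r - s) ^ n) - 2 * real n * r ^ (n - 1) * ((u s + 1) * s))"
      by (intro integral_cong) (simp add: algebra_simps)
    also have "\<dots> = integral {0..c} (\<lambda>s. (u s + 1) * (r + s) ^ n - (u s + 1) * (r - s) ^ n) - integral {0..c} (\<lambda>s. 2 * real n * r ^ (n - 1) * ((u s + 1) * s))"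
      by (intro integral_diff int continuous_intros)
    also have "integral {0..c} (\<lambda>s. (u s + 1) * (r + s) ^ n - (u s + 1) * (r - s) ^ n) = integral {0..c} (\<lambda>s. (u s + 1) * (r + s) ^ n) - integral {0..c} (\<lambda>s. (u s + 1) * (r - s) ^ n)"
      by (intro integral_diff int continuous_intros)
    finally show ?thesis by simp
  qed
  have L2: "integral {c..2 * R} (\<lambda>s. (u s + 1) * ((r + s) ^ n - 2 * real n * r ^ (n - 1) * s))
     = integral {c..2 * R} (\<lambda>s. (u s + 1) * (r + s) ^ n) - 2 * real n * r ^ (n - 1) * integral {c..2 * R} (\<lambda>s. (u s + 1) * s)"
  proof -
    have "integral {c..2 * R} (\<lambda>s. (u s + 1) * ((r + s) ^ n - 2 * real n * r ^ (n - 1) * s))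
       = integral {c..2 * R} (\<lambda>s. (u s + 1) * (r + s) ^ n - 2 * real n * r ^ (n - 1) * ((u s + 1) * s))"
      by (intro integral_cong) (simp add: algebra_simps)
    also have "\<dots> = integral {c..2 * R} (\<lambda>s. (u s + 1) * (r + s) ^ n) - integral {c..2 * R} (\<lambda>s. 2 * real n * r ^ (n - 1) * ((u s + 1) * s))"
      by (intro integral_diff int continuous_intros)
    finally show ?thesis by simp
  qed
  show ?thesis
    using S2 unfolding M_def[symmetric] S3a S3b S4 split[OF cg(1)] split[OF cg(2)]
    unfolding L1 L2 by (simp add: algebra_simps)
qed

lemma exp_quarter_int: assumes "c \<ge> 0" shows "integral {0..c} (\<lambda>s::real. exp (- s / 4)) \<le> 4"
proof -
  have "((\<lambda>s::real. exp (- s / 4)) has_integral (- 4 * exp (- c / 4) - (- 4 * exp (- 0 / 4)))) {0..c}"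
  proof (intro fundamental_theorem_of_calculus assms)
    fix t :: real
    have "((\<lambda>s. - 4 * exp (- s / 4)) has_real_derivative exp (- t / 4)) (at t)"
      by (auto intro!: derivative_eq_intros)
    then show "((\<lambda>s. - 4 * exp (- s / 4)) has_vector_derivative exp (- t / 4)) (at t within {0..c})"
      by (simp add: has_real_derivative_iff_has_vector_derivative[symmetric] has_field_derivative_at_within)
  qed
  then show ?thesis by (simp add: integral_unique)
qed

lemma Ep_bound:
  fixes d :: nat and r :: real
  assumes d: "d \<ge> 2" and rR: "R \<le> r"
  defines "c \<equiv> min r (2 * R)" and "n \<equiv> d - 1"
  shows "\<bar>integral {0..c} (\<lambda>s. (u s + 1) * ((r + s) ^ n - (r - s) ^ n - 2 * real n * r ^ (n - 1) * s))\<bar>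
           \<le> (if d \<le> 3 then 0 else 2 ^ d * 13824 * r ^ (d - 4))"
proof -
  have R0: "R > 0" using R1 by simp
  have c0: "0 \<le> c" "c \<le> r" "c \<le> 2 * R" using rR R0 by (auto simp: c_def)
  define B where "B = (\<lambda>s::real. if n \<le> 2 then 0 else 2 ^ (n + 1) * s ^ 3 * r ^ (n - 3))"
  have "norm (integral {0..c} (\<lambda>s. (u s + 1) * ((r + s) ^ n - (r - s) ^ n - 2 * real n * r ^ (n - 1) * s)))
        \<le> integral {0..c} (\<lambda>s. 2 * exp (- s / 2) * B s)"
  proof (rule integral_norm_bound_integral)
    show "(\<lambda>s. (u s + 1) * ((r + s) ^ n - (r - s) ^ n - 2 * real n * r ^ (n - 1) * s)) integrable_on {0..c}"
      by (intro integrable_continuous_interval continuous_intros)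
    show "(\<lambda>s. 2 * exp (- s / 2) * B s) integrable_on {0..c}"
      unfolding B_def by (cases "n \<le> 2") (auto intro!: integrable_continuous_interval continuous_intros)
    fix s assume s: "s \<in> {0..c}"
    have kb: "\<bar>(r + s) ^ n - (r - s) ^ n - 2 * real n * r ^ (n - 1) * s\<bar> \<le> B s"
      using kernel_bound[of s r n] s c0 unfolding B_def by auto
    have wb: "\<bar>u s + 1\<bar> \<le> 2 * exp (- s / 2)" using w_bound[of s] s c0 by auto
    show "norm ((u s + 1) * ((r + s) ^ n - (r - s) ^ n - 2 * real n * r ^ (n - 1) * s)) \<le> 2 * exp (- s / 2) * B s"
      unfolding real_norm_def abs_mult by (intro mult_mono wb kb) auto
  qed
  also have "\<dots> \<le> (if d \<le> 3 then 0 else 2 ^ d * 13824 * r ^ (d - 4))"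
  proof (cases "d \<le> 3")
    case True
    then have "n \<le> 2" unfolding n_def by simp
    then show ?thesis using True by (simp add: B_def)
  next
    case False
    then have n3: "\<not> n \<le> 2" unfolding n_def by simp
    have "integral {0..c} (\<lambda>s. 2 * exp (- s / 2) * B s) = 2 ^ (n + 1) * r ^ (n - 3) * integral {0..c} (\<lambda>s. 2 * exp (- s / 2) * s ^ 3)"
    proof -
      have "integral {0..c} (\<lambda>s. 2 * exp (- s / 2) * B s) = integral {0..c} (\<lambda>s. (2 ^ (n + 1) * r ^ (n - 3)) * (2 * exp (- s / 2) * s ^ 3))"
        by (intro integral_cong) (simp add: B_def n3 mult_ac)
      then show ?thesis by (simp only: integral_mult_right)
    qed
    also have "integral {0..c} (\<lambda>s. 2 * exp (- s / 2) * s ^ 3) \<le> integral {0..c} (\<lambda>s. 3456 * exp (- s / 4))"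
    proof (intro integral_le integrable_continuous_interval continuous_intros)
      fix s :: real assume s: "s \<in> {0..c}"
      have "(s / 4) ^ 3 \<le> real 3 ^ 3 * exp (s / 4)" using s c0 by (intro pow_le_exp) auto
      then have "s ^ 3 \<le> 1728 * exp (s / 4)" by (simp add: power_divide)
      then have "2 * exp (- s / 2) * s ^ 3 \<le> 2 * exp (- s / 2) * (1728 * exp (s / 4))"
        by (intro mult_left_mono) auto
      also have "\<dots> = 3456 * (exp (- s / 2) * exp (s / 4))" by simp
      also have "exp (- s / 2) * exp (s / 4) = exp (- s / 4)" by (simp flip: exp_add)
      finally show "2 * exp (- s / 2) * s ^ 3 \<le> 3456 * exp (- s / 4)" by simp
    qed auto
    also have "integral {0..c} (\<lambda>s. 3456 * exp (- s / 4)) \<le> 3456 * 4"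
      using exp_quarter_int[OF c0(1)] by simp
    finally have fin: "integral {0..c} (\<lambda>s. 2 * exp (- s / 2) * B s) \<le> 2 ^ (n + 1) * r ^ (n - 3) * (3456 * 4)"
      using c0 rR R0 by (simp add: mult_left_mono)
    have e: "n + 1 = d" "n - 3 = d - 4" using d unfolding n_def by auto
    show ?thesis using fin False unfolding e by (simp add: mult_ac)
  qed
  finally show ?thesis by simp
qed

lemma Rpow_bound: "R ^ k \<le> 2 ^ k * real k ^ k * exp (R / 2)"
proof -
  have "(R / 2) ^ k \<le> real k ^ k * exp (R / 2)" using R1 by (intro pow_le_exp) auto
  then show ?thesis by (simp add: power_divide field_simps)
qed

lemma Et_bound:
  fixes d :: nat and r :: real
  assumes d: "d \<ge> 2" and rR: "R \<le> r"
  defines "c \<equiv> min r (2 * R)" and "n \<equiv> d - 1"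
  shows "\<bar>integral {c..2 * R} (\<lambda>s. (u s + 1) * ((r + s) ^ n - 2 * real n * r ^ (n - 1) * s))\<bar>
           \<le> 2 * (2 * real d - 1) * 4 ^ (d - 1) * 2 ^ d * real d ^ d * exp (- R / 2)"
proof (cases "2 * R \<le> r")
  case True
  then have "c = 2 * R" by (simp add: c_def)
  moreover have "0 \<le> 2 * (2 * real d - 1) * 4 ^ (d - 1) * 2 ^ d * real d ^ d * exp (- R / 2)"
    using d by (intro mult_nonneg_nonneg) auto
  ultimately show ?thesis by simp
next
  case False
  have R0: "R > 0" using R1 by simp
  then have cr: "c = r" using False by (simp add: c_def)
  define K where "K = 2 * exp (- R) * ((1 + 2 * real n) * (4 * R) ^ n)"
  have "norm (integral {r..2 * R} (\<lambda>s. (u s + 1) * ((r + s) ^ n - 2 * real n * r ^ (n - 1) * s)))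
        \<le> integral {r..2 * R} (\<lambda>s. K)"
  proof (rule integral_norm_bound_integral)
    show "(\<lambda>s. (u s + 1) * ((r + s) ^ n - 2 * real n * r ^ (n - 1) * s)) integrable_on {r..2 * R}"
      by (intro integrable_continuous_interval continuous_intros)
    fix s assume s: "s \<in> {r..2 * R}"
    then have s': "R \<le> s" "s \<le> 2 * R" using rR by auto
    have wb: "\<bar>u s + 1\<bar> \<le> 2 * exp (- R)" using w_bound_mid(1)[OF s'] .
    have a: "(r + s) ^ n \<le> (4 * R) ^ n" using s rR R0 False by (intro power_mono) auto
    have "r ^ (n - 1) * s \<le> (4 * R) ^ (n - 1) * (4 * R)"
      using s rR R0 False by (intro mult_mono power_mono) auto
    also have "(4 * R) ^ (n - 1) * (4 * R) = (4 * R) ^ n"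
    proof -
      have n: "Suc (n - 1) = n" using d unfolding n_def by simp
      show ?thesis using power_Suc2[of "4 * R" "n - 1"] unfolding n by simp
    qed
    finally have b: "r ^ (n - 1) * s \<le> (4 * R) ^ n" .
    have "\<bar>(r + s) ^ n - 2 * real n * r ^ (n - 1) * s\<bar> \<le> (r + s) ^ n + 2 * real n * (r ^ (n - 1) * s)"
      using s rR R0 by (simp add: abs_le_iff mult_ac)
    also have "\<dots> \<le> (4 * R) ^ n + 2 * real n * (4 * R) ^ n"
      using a b by (intro add_mono mult_left_mono) auto
    finally have kb: "\<bar>(r + s) ^ n - 2 * real n * r ^ (n - 1) * s\<bar> \<le> (1 + 2 * real n) * (4 * R) ^ n"
      by (simp add: algebra_simps)
    show "norm ((u s + 1) * ((r + s) ^ n - 2 * real n * r ^ (n - 1) * s)) \<le> K"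
      unfolding real_norm_def abs_mult K_def by (rule mult_mono[OF wb kb]) auto
  qed (rule integrable_const_ivl)
  also have "integral {r..2 * R} (\<lambda>s. K) = (2 * R - r) * K" using False by simp
  also have "\<dots> \<le> R * K" using rR R0 unfolding K_def by (intro mult_right_mono) auto
  also have "R * K = 2 * (1 + 2 * real n) * 4 ^ n * (R ^ (n + 1) * exp (- R))"
    unfolding K_def by (simp add: power_mult_distrib mult_ac)
  also have "R ^ (n + 1) * exp (- R) \<le> 2 ^ d * real d ^ d * exp (R / 2) * exp (- R)"
    using Rpow_bound[of d] d unfolding n_def by (intro mult_right_mono) auto
  also have "2 ^ d * real d ^ d * exp (R / 2) * exp (- R) = 2 ^ d * real d ^ d * exp (- R / 2)"
    by (simp add: mult.assoc flip: exp_add)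
  finally have fin: "\<bar>integral {c..2 * R} (\<lambda>s. (u s + 1) * ((r + s) ^ n - 2 * real n * r ^ (n - 1) * s))\<bar>
      \<le> 2 * (1 + 2 * real n) * 4 ^ n * (2 ^ d * real d ^ d * exp (- R / 2))" unfolding cr by simp
  have e: "1 + 2 * real n = 2 * real d - 1" using d by (simp add: n_def of_nat_diff)
  show ?thesis using fin[unfolded e] unfolding n_def by (simp only: mult_ac)
qed

lemma Wint_bound:
  shows "\<bar>integral {0..2 * R} (\<lambda>s. (u s + 1) * s) - K0\<bar> \<le> 132 * exp (- R / 2)"
proof -
  have R0: "R > 0" using R1 by simp
  have sp: "K0 = integral {0..2 * R} f0 + integral {2 * R..} f0" using K0_split[of "2 * R"] R0 by simp
  have diff: "integral {0..2 * R} (\<lambda>s. (u s + 1) * s) - integral {0..2 * R} f0 = integral {0..2 * R} (\<lambda>s. (u s - vprof s) * s)"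
  proof -
    have "integral {0..2 * R} (\<lambda>s. (u s + 1) * s) - integral {0..2 * R} f0 = integral {0..2 * R} (\<lambda>s. (u s + 1) * s - f0 s)"
      by (intro integral_diff[symmetric] integrable_continuous_interval continuous_intros f0_cont)
    also have "\<dots> = integral {0..2 * R} (\<lambda>s. (u s - vprof s) * s)"
      by (intro integral_cong) (simp add: f0_def algebra_simps)
    finally show ?thesis .
  qed
  have "norm (integral {0..2 * R} (\<lambda>s. (u s - vprof s) * s)) \<le> integral {0..2 * R} (\<lambda>s. 4 * R * exp (- R))"
  proof (rule integral_norm_bound_integral)
    show "(\<lambda>s. (u s - vprof s) * s) integrable_on {0..2 * R}"
      by (intro integrable_continuous_interval continuous_intros vprof_cont)
    fix s assume s: "s \<in> {0..2 * R}"
    show "norm ((u s - vprof s) * s) \<le> 4 * R * exp (- R)"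
    proof (cases "s \<le> R")
      case True then show ?thesis using uv[of s] s by auto
    next
      case False
      then have "\<bar>u s - vprof s\<bar> \<le> 2 * exp (- R)" using w_bound_mid(2)[of s] s by auto
      then have "\<bar>u s - vprof s\<bar> * \<bar>s\<bar> \<le> 2 * exp (- R) * (2 * R)"
        using s by (intro mult_mono) auto
      then show ?thesis by (simp add: abs_mult mult_ac)
    qed
  qed auto
  also have "\<dots> = 8 * (R ^ 2 * exp (- R))" using R0 by (simp add: power2_eq_square)
  also have "R ^ 2 * exp (- R) \<le> 2 ^ 2 * real 2 ^ 2 * exp (R / 2) * exp (- R)"
    using Rpow_bound[of 2] by (intro mult_right_mono) auto
  also have "2 ^ 2 * real 2 ^ 2 * exp (R / 2) * exp (- R) = 16 * exp (- R / 2)"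
    by (simp add: mult.assoc flip: exp_add)
  finally have b1: "\<bar>integral {0..2 * R} (\<lambda>s. (u s - vprof s) * s)\<bar> \<le> 128 * exp (- R / 2)" by simp
  have t0: "0 \<le> integral {2 * R..} f0" using f0_tail(2)[of "2 * R"] R0 by simp
  have "integral {2 * R..} f0 \<le> 2 * (2 * R + 1) * exp (- (2 * R))" using f0_tail(3)[of "2 * R"] R0 by simp
  also have "\<dots> \<le> 2 * (2 * exp R) * exp (- (2 * R))"
  proof -
    have "2 * R + 1 \<le> 2 * exp R" using exp_ge_add_one_self[of R] R0 by linarith
    then show ?thesis by (intro mult_right_mono mult_left_mono) auto
  qed
  also have "\<dots> = 4 * (exp R * exp (- (2 * R)))" by simp
  also have "exp R * exp (- (2 * R)) = exp (- R)" by (simp flip: exp_add)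
  also have "4 * exp (- R) \<le> 4 * exp (- R / 2)"
  proof -
    have "exp (- R) \<le> exp (- R / 2)" using R0 by simp
    then show ?thesis by linarith
  qed
  finally have b2: "integral {2 * R..} f0 \<le> 4 * exp (- R / 2)" .
  have eq: "integral {0..2 * R} (\<lambda>s. (u s + 1) * s) - K0 = integral {0..2 * R} (\<lambda>s. (u s - vprof s) * s) - integral {2 * R..} f0"
    using diff sp by simp
  show ?thesis unfolding eq using b1 b2 t0 unfolding abs_le_iff by linarith
qed

end



lemma powr_pow_inv:
  fixes x :: real assumes "x \<ge> 0" "d > 0"
  shows "(x powr (1 / real d)) ^ d = x"
proof (cases "x = 0")
  case True then show ?thesis using assms by simp
next
  case False
  then have x: "x > 0" using assms by simp
  have "(x powr (1 / real d)) ^ d = (x powr (1 / real d)) powr (real d)"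
    using x by (simp add: powr_realpow)
  also have "\<dots> = x" using x assms by (simp add: powr_powr)
  finally show ?thesis .
qed

lemma sigma_pos: "d > 0 \<Longrightarrow> sigma_d d > 0"
  unfolding sigma_d_def by (intro divide_pos_pos Gamma_real_pos) auto

lemma omega_sigma: "d > 0 \<Longrightarrow> unit_ball_vol (real d) * real d = sigma_d d"
proof -
  assume d: "d > 0"
  have "Gamma (real d / 2 + 1) = (real d / 2) * Gamma (real d / 2)"
  proof -
    have "real d / 2 \<notin> \<int>\<^sub>\<le>\<^sub>0" using d by (auto dest: nonpos_Ints_nonpos)
    then show ?thesis using Gamma_plus1[of "real d / 2"] by simp
  qed
  moreover have "Gamma (real d / 2) > 0" using d by (intro Gamma_real_pos) auto
  ultimately show ?thesis using d unfolding unit_ball_vol_def sigma_d_def by (simp only:) (simp add: field_simps)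
qed

lemma box_content:
  assumes "L \<ge> 0"
  shows "measure lborel (torus_box L :: 'a::euclidean_space set) = L ^ DIM('a)"
proof -
  have le: "\<forall>i\<in>(Basis::'a set). (- ((L / 2) *\<^sub>R One)) \<bullet> i \<le> ((L / 2) *\<^sub>R One) \<bullet> i"
    using assms by simp
  have "measure lborel (torus_box L :: 'a set) = (\<Prod>i\<in>(Basis::'a set). ((L / 2) *\<^sub>R One) \<bullet> i - (- ((L / 2) *\<^sub>R One)) \<bullet> i)"
    unfolding torus_box_def content_cbox_cases by (rule if_P[OF le])
  also have "\<dots> = (\<Prod>i\<in>(Basis::'a set). L)"
    by (intro prod.cong refl) simp
  finally show ?thesis by simp
qed

lemma cball_sub_box:
  assumes "M \<le> L / 2"
  shows "cball (0::'a::euclidean_space) M \<subseteq> torus_box L"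
proof
  fix x :: 'a assume "x \<in> cball 0 M"
  then have nx: "norm x \<le> L / 2" using assms by simp
  show "x \<in> torus_box L"
    unfolding torus_box_def mem_box
  proof
    fix i :: 'a assume i: "i \<in> Basis"
    have "\<bar>x \<bullet> i\<bar> \<le> L / 2" using Basis_le_norm[OF i, of x] nx by simp
    then show "(- ((L / 2) *\<^sub>R One)) \<bullet> i \<le> x \<bullet> i \<and> x \<bullet> i \<le> ((L / 2) *\<^sub>R One) \<bullet> i"
      using i by (auto simp: abs_le_iff)
  qed
qed

context prof begin

lemma box_integral:
  fixes r L :: real
  assumes rR: "R \<le> r" and hML: "r + 2 * R \<le> L / 2"
  shows "(\<lambda>x::'a::euclidean_space. u (norm x - r)) integrable_on torus_box L"
    and "integral (torus_box L) (\<lambda>x::'a. u (norm x - r))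
          = - (L ^ DIM('a)) - unit_ball_vol DIM('a) * integral {0..r + 2 * R} (\<lambda>t. u' (t - r) * t ^ DIM('a))"
proof -
  define M where "M = r + 2 * R"
  have R0: "R > 0" using R1 by simp
  have M0: "M \<ge> 0" using rR R0 by (simp add: M_def)
  have L0: "L \<ge> 0" using hML M0 by (simp add: M_def)
  define g where "g = (\<lambda>x::'a. indicator (cball 0 M) x * (u (norm x - r) - u (M - r)))"
  have hd: "((\<lambda>t. u (t - r)) has_real_derivative u' (t - r)) (at t)" for t
  proof -
    have g: "((\<lambda>t. t - r) has_real_derivative 1) (at t)" by (auto intro!: derivative_eq_intros)
    show ?thesis using DERIV_chain2[where g="\<lambda>t. t - r" and x=t and s=UNIV, OF uder[of "t - r"] g] by simp
  qed
  have hc: "continuous_on UNIV (\<lambda>t. u' (t - r))" by (intro continuous_intros)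
  note rf = radial_fubini[of M "\<lambda>t. u (t - r)" "\<lambda>t. u' (t - r)", OF M0 hd hc]
  have uM: "u (M - r) = -1" using u2[of "2 * R"] by (simp add: M_def)
  have gint: "integrable lborel g" using rf(1) unfolding g_def .
  have gval: "integral UNIV g = - unit_ball_vol DIM('a) * integral {0..M} (\<lambda>t. u' (t - r) * t ^ DIM('a))"
    using integral_lborel[OF gint] rf(2) unfolding g_def by simp
  have ghas: "(g has_integral integral UNIV g) UNIV"
    using integrable_integral[OF integrable_on_lborel[OF gint]] by simp
  have sub: "cball 0 M \<subseteq> (torus_box L :: 'a set)" using hML by (intro cball_sub_box) (simp add: M_def)
  have gres: "(\<lambda>x. if x \<in> torus_box L then g x else 0) = g"
  proof (rule ext)
    fix x :: 'a
    show "(if x \<in> torus_box L then g x else 0) = g x"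
    proof (cases "x \<in> torus_box L")
      case False
      then have "x \<notin> cball 0 M" using sub by auto
      then show ?thesis using False by (simp add: g_def)
    qed simp
  qed
  have gbox: "(g has_integral integral UNIV g) (torus_box L)"
    using ghas unfolding has_integral_restrict_UNIV[symmetric, of _ _ "torus_box L"] gres .
  have pt: "u (norm x - r) = -1 + g x" for x :: 'a
  proof (cases "norm x \<le> M")
    case True then show ?thesis using uM by (simp add: g_def dist_norm)
  next
    case False
    then have "u (norm x - r) = -1" using u2[of "norm x - r"] by (simp add: M_def)
    then show ?thesis using False by (simp add: g_def dist_norm)
  qed
  have box_eq: "torus_box L = cbox (- ((L / 2) *\<^sub>R One)) ((L / 2) *\<^sub>R (One::'a))" by (simp add: torus_box_def)
  have hf: "((\<lambda>x::'a. -1 + g x) has_integral (- measure lborel (torus_box L :: 'a set) + integral UNIV g)) (torus_box L)"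
    using has_integral_add[OF has_integral_const[of "-1::real" "- ((L / 2) *\<^sub>R One)" "(L / 2) *\<^sub>R (One::'a)"] gbox[unfolded box_eq]]
    unfolding box_eq by simp
  show "(\<lambda>x::'a. u (norm x - r)) integrable_on torus_box L"
    using hf unfolding pt by blast
  show "integral (torus_box L) (\<lambda>x::'a. u (norm x - r))
          = - (L ^ DIM('a)) - unit_ball_vol DIM('a) * integral {0..r + 2 * R} (\<lambda>t. u' (t - r) * t ^ DIM('a))"
    using integral_unique[OF hf] box_content[OF L0] gval unfolding pt M_def by simp
qed

end



lemma pow_powr_inv:
  fixes x :: real assumes "x > 0" "d > 0"
  shows "(x ^ d) powr (1 / real d) = x"
  using assms by (simp add: powr_realpow[symmetric] powr_powr)

lemma powr_nat_diff:
  fixes r :: real assumes "r > 0" "k \<le> d"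
  shows "r powr (real d - real k) = r ^ (d - k)"
  using assms by (simp add: powr_realpow[symmetric] of_nat_diff)

theorem lemma3p3:
  fixes vR :: "real \<Rightarrow> real \<Rightarrow> real" and \<xi> :: real
  assumes dim: "DIM('a::euclidean_space) \<ge> 2"
    and vR: "admissible_vR vR"
    and xi: "\<xi> > 0"
  shows "\<exists>C R0 L0 \<phi>0. C > 0 \<and> R0 > 0 \<and> \<phi>0 > 0 \<and>
    (\<forall>L \<phi> R \<eta>.
       L \<ge> L0 \<and> 0 < \<phi> \<and> \<phi> \<le> \<phi>0 \<and> \<phi> \<ge> \<xi> * L powr (- real DIM('a) / (real DIM('a) + 1))
       \<and> R \<ge> R0 \<and> 0 \<le> \<eta> \<and> \<eta> \<le> 1
       \<and> R \<le> r_eta DIM('a) L \<phi> \<eta> \<and> r_eta DIM('a) L \<phi> \<eta> \<le> r_eta DIM('a) L \<phi> 1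
     \<longrightarrow>
       (let d = DIM('a); r = r_eta d L \<phi> \<eta>;
            I = integral (torus_box L :: 'a set) (\<lambda>x. vR R (norm x - r)) in
        C1 d > 0
        \<and> (\<exists>E1 \<epsilon>. I = L ^ d * (-1 + \<phi> * \<eta>) + r powr (real d - 2) * (C1 d + E1) + \<epsilon>
               \<and> \<bar>E1\<bar> \<le> C * exp (- R / C)
               \<and> (if d \<le> 3 then \<bar>\<epsilon>\<bar> \<le> C * exp (- R / C)
                  else \<bar>\<epsilon>\<bar> \<le> C * r powr (real d - 4)))
        \<and> (\<forall>\<alpha>. (1 / L ^ d) * integral (torus_box L :: 'a set) (\<lambda>x. vR R (norm x - r) + \<alpha>) = -1 + \<phi>
               \<longrightarrow> (\<exists>E2 E3. \<alpha> = \<phi> * (1 - \<eta>) - C1 d / L ^ d * r powr (real d - 2) * (1 + E2)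
                                 - E3 / L ^ d
                          \<and> \<bar>E2\<bar> \<le> C * exp (- R / C)
                          \<and> \<bar>E3\<bar> \<le> C * r powr (real d - 4)))))"
proof -
  define d where "d = DIM('a)"
  have d2: "d \<ge> 2" using dim by (simp add: d_def)
  have d0: "d > 0" using d2 by simp
  define \<sigma> where "\<sigma> = sigma_d d"
  have \<sigma>0: "\<sigma> > 0" using sigma_pos[OF d0] by (simp add: \<sigma>_def)
  define \<omega> where "\<omega> = unit_ball_vol (real d)"
  have \<omega>\<sigma>: "\<omega> * real d = \<sigma>" using omega_sigma[OF d0] by (simp add: \<omega>_def \<sigma>_def)
  have \<omega>0: "\<omega> > 0" unfolding \<omega>_def by simp
  define n where "n = d - 1"
  have C1eq: "C1 d = real n * \<sigma> * (2 * K0)" using C1_eq[of d] d2 by (simp add: n_def \<sigma>_def of_nat_diff)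
  have C1pos: "C1 d > 0" using C1eq K0_pos \<sigma>0 d2 by (simp add: n_def)
  define Kt where "Kt = 2 * (2 * real d - 1) * 4 ^ (d - 1) * 2 ^ d * real d ^ d"
  define A where "A = 2 * real n * \<sigma> * 132 + \<sigma> * Kt"
  define B where "B = \<sigma> * 2 ^ d * 13824"
  define C where "C = max 2 (max A (max B (A / C1 d)))"
  define \<phi>0 where "\<phi>0 = 2 * \<sigma> / (real d * 6 ^ d)"
  have Kt0: "Kt \<ge> 0" using d2 unfolding Kt_def by simp
  have A0: "A \<ge> 0" using \<sigma>0 Kt0 unfolding A_def by simp
  have C2: "C \<ge> 2" "C \<ge> A" "C \<ge> B" "C \<ge> A / C1 d" unfolding C_def by auto
  show ?thesis
  proof (rule exI[of _ C], rule exI[of _ 1], rule exI[of _ "1::real"], rule exI[of _ \<phi>0], intro conjI allI impI)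
    show "C > 0" using C2 by simp
    show "0 < (1::real)" by simp
    show "\<phi>0 > 0" using \<sigma>0 d0 unfolding \<phi>0_def by simp
    fix L \<phi> R \<eta> :: real
    assume H: "1 \<le> L \<and> 0 < \<phi> \<and> \<phi> \<le> \<phi>0 \<and> \<phi> \<ge> \<xi> * L powr (- real DIM('a) / (real DIM('a) + 1))
       \<and> 1 \<le> R \<and> 0 \<le> \<eta> \<and> \<eta> \<le> 1
       \<and> R \<le> r_eta DIM('a) L \<phi> \<eta> \<and> r_eta DIM('a) L \<phi> \<eta> \<le> r_eta DIM('a) L \<phi> 1"
    define r where "r = r_eta d L \<phi> \<eta>"
    have L1: "L \<ge> 1" and \<phi>pos: "\<phi> > 0" and \<phi>le: "\<phi> \<le> \<phi>0" and R1: "R \<ge> 1" and \<eta>0: "\<eta> \<ge> 0"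
      and rR: "R \<le> r" and rle: "r \<le> r_eta d L \<phi> 1"
      using H by (auto simp: r_def d_def)
    have r0: "r > 0" using rR R1 by simp
    define u where "u = vR R"
    interpret prof u "deriv u" R
      using adm_facts[OF vR, of R] R1 unfolding u_def by unfold_locales auto
    define X where "X = \<phi> * real d / (2 * \<sigma>)"
    have X0: "X > 0" using \<phi>pos d0 \<sigma>0 by (simp add: X_def)
    have rsmall: "r \<le> L / 6"
    proof -
      have "r_eta d L \<phi> 1 = X powr (1 / real d) * L" by (simp add: r_eta_def X_def \<sigma>_def)
      also have "X powr (1 / real d) \<le> (\<phi>0 * real d / (2 * \<sigma>)) powr (1 / real d)"
        unfolding X_def using X0 \<phi>le \<sigma>0 d0 by (intro powr_mono2 divide_right_mono mult_right_mono) (auto simp: X_def)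
      also have "\<phi>0 * real d / (2 * \<sigma>) = (1 / 6) ^ d"
        using \<sigma>0 d0 unfolding \<phi>0_def by (simp add: field_simps power_divide)
      also have "((1 / 6) ^ d) powr (1 / real d) = (1 / 6 :: real)"
        using d0 by (intro pow_powr_inv) auto
      finally show ?thesis using rle L1 by (simp add: mult_right_mono)
    qed
    have hML: "r + 2 * R \<le> L / 2" using rsmall rR by simp
    have \<eta>pos: "\<eta> > 0"
    proof (rule ccontr)
      assume "\<not> \<eta> > 0"
      then have "\<eta> = 0" using \<eta>0 by simp
      then have "r = 0" using d0 by (simp add: r_def r_eta_def)
      then show False using r0 by simp
    qed
    have rd: "r ^ d = \<eta> * X * L ^ d"
    proof -
      have "r = \<eta> powr (1 / real d) * X powr (1 / real d) * L" by (simp add: r_def r_eta_def X_def \<sigma>_def)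
      then have "r ^ d = (\<eta> powr (1 / real d)) ^ d * (X powr (1 / real d)) ^ d * L ^ d"
        by (simp add: power_mult_distrib)
      then show ?thesis using \<eta>0 X0 d0 by (simp add: powr_pow_inv)
    qed
    have vol: "2 * \<omega> * r ^ d = \<phi> * \<eta> * L ^ d"
      unfolding rd X_def using \<omega>\<sigma>[symmetric] \<sigma>0 d0 \<omega>0 by (simp add: field_simps)
    define P where "P = integral {0..r + 2 * R} (\<lambda>t. deriv u (t - r) * t ^ d)"
    define I where "I = integral (torus_box L :: 'a set) (\<lambda>x. vR R (norm x - r))"
    have Ieq: "I = - (L ^ d) - \<omega> * P"
      using box_integral(2)[OF rR hML, where 'a='a] unfolding I_def P_def \<omega>_def d_def u_def by simp
    define c where "c = min r (2 * R)"
    define W where "W = integral {0..2 * R} (\<lambda>s. (u s + 1) * s)"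
    define Ep where "Ep = integral {0..c} (\<lambda>s. (u s + 1) * ((r + s) ^ n - (r - s) ^ n - 2 * real n * r ^ (n - 1) * s))"
    define Et where "Et = integral {c..2 * R} (\<lambda>s. (u s + 1) * ((r + s) ^ n - 2 * real n * r ^ (n - 1) * s))"
    have oneD: "- P - 2 * r ^ d = real d * (2 * real n * r ^ (n - 1) * W + Ep + Et)"
      using oneD_identity[OF d2 rR] unfolding P_def W_def Ep_def Et_def c_def n_def by simp
    have Ep_b: "\<bar>Ep\<bar> \<le> (if d \<le> 3 then 0 else 2 ^ d * 13824 * r ^ (d - 4))"
      using Ep_bound[OF d2 rR] unfolding Ep_def c_def n_def by simp
    have Et_b: "\<bar>Et\<bar> \<le> Kt * exp (- R / 2)"
      using Et_bound[OF d2 rR] unfolding Et_def c_def n_def Kt_def by simp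
    have W_b: "\<bar>W - K0\<bar> \<le> 132 * exp (- R / 2)"
      using Wint_bound unfolding W_def .
    have rpow: "r powr (real d - 2) = r ^ (d - 2)" using powr_nat_diff[OF r0, of 2 d] d2 by simp
    have rge1: "r ^ (d - 2) \<ge> 1" using rR R1 by (intro one_le_power) simp
    have n1: "n - 1 = d - 2" unfolding n_def by simp
    define E1 where "E1 = 2 * real n * \<sigma> * (W - K0) + \<sigma> * Et / r ^ (d - 2)"
    define \<epsilon> where "\<epsilon> = \<sigma> * Ep"
    have Iexp: "I = L ^ d * (-1 + \<phi> * \<eta>) + r powr (real d - 2) * (C1 d + E1) + \<epsilon>"
    proof -
      have "I = - (L ^ d) + 2 * \<omega> * r ^ d + \<omega> * (- P - 2 * r ^ d)" unfolding Ieq by (simp add: algebra_simps)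
      also have "\<dots> = L ^ d * (-1 + \<phi> * \<eta>) + \<sigma> * (2 * real n * r ^ (d - 2) * W + Ep + Et)"
        unfolding vol oneD n1 using \<omega>\<sigma> by (simp add: algebra_simps)
      also have "\<dots> = L ^ d * (-1 + \<phi> * \<eta>) + r ^ (d - 2) * (C1 d + E1) + \<epsilon>"
        unfolding E1_def \<epsilon>_def C1eq using rge1 r0 by (simp add: field_simps)
      finally show ?thesis unfolding rpow .
    qed
    have eR: "exp (- R / 2) \<le> exp (- R / C)"
    proof -
      have "R / C \<le> R / 2" using C2 R1 by (intro divide_left_mono) auto
      then show ?thesis by simp
    qed
    have E1_b: "\<bar>E1\<bar> \<le> A * exp (- R / 2)"
    proof -
      have t1: "\<bar>E1\<bar> \<le> \<bar>2 * real n * \<sigma> * (W - K0)\<bar> + \<bar>\<sigma> * Et / r ^ (d - 2)\<bar>"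
        unfolding E1_def by (rule abs_triangle_ineq)
      have e1: "\<bar>2 * real n * \<sigma> * (W - K0)\<bar> = 2 * real n * \<sigma> * \<bar>W - K0\<bar>"
        using \<sigma>0 by (simp add: abs_mult)
      have e2: "\<bar>\<sigma> * Et / r ^ (d - 2)\<bar> = \<sigma> * \<bar>Et\<bar> / r ^ (d - 2)"
        using \<sigma>0 r0 by (simp add: abs_mult abs_divide)
      have t2: "\<sigma> * \<bar>Et\<bar> / r ^ (d - 2) \<le> \<sigma> * \<bar>Et\<bar>"
      proof -
        have "0 \<le> \<sigma> * \<bar>Et\<bar>" using \<sigma>0 by simp
        then show ?thesis using rge1 by (simp add: divide_le_eq mult_le_cancel_left1)
      qed
      have t3: "2 * real n * \<sigma> * \<bar>W - K0\<bar> \<le> 2 * real n * \<sigma> * (132 * exp (- R / 2))"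
        using W_b \<sigma>0 by (intro mult_left_mono) auto
      have t4: "\<sigma> * \<bar>Et\<bar> \<le> \<sigma> * (Kt * exp (- R / 2))"
        using Et_b \<sigma>0 by (intro mult_left_mono) auto
      have eA: "A * exp (- R / 2) = 2 * real n * \<sigma> * (132 * exp (- R / 2)) + \<sigma> * (Kt * exp (- R / 2))"
        unfolding A_def by (simp add: algebra_simps)
      show ?thesis using t1 t2 t3 t4 unfolding e1 e2 eA by linarith
    qed
    have E1_C: "\<bar>E1\<bar> \<le> C * exp (- R / C)"
      using E1_b C2 A0 eR by (meson mult_mono exp_ge_zero order_trans)
    have eps_b: "\<bar>\<epsilon>\<bar> \<le> C * r powr (real d - 4)"
    proof (cases "d \<le> 3")
      case True
      then have "\<epsilon> = 0" using Ep_b by (simp add: \<epsilon>_def)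
      then show ?thesis using C2 by simp
    next
      case False
      have "\<bar>\<epsilon>\<bar> \<le> B * r ^ (d - 4)" using Ep_b False \<sigma>0 unfolding \<epsilon>_def B_def
        by (simp add: abs_mult mult_left_mono mult.assoc)
      also have "\<dots> \<le> C * r ^ (d - 4)" using C2 r0 by (intro mult_right_mono) auto
      also have "r ^ (d - 4) = r powr (real d - 4)" using powr_nat_diff[OF r0, of 4 d] False by simp
      finally show ?thesis .
    qed
    have eps_small: "d \<le> 3 \<Longrightarrow> \<bar>\<epsilon>\<bar> \<le> C * exp (- R / C)"
      using Ep_b C2 by (simp add: \<epsilon>_def)
    have fint: "(\<lambda>x::'a. vR R (norm x - r)) integrable_on torus_box L"
      using box_integral(1)[OF rR hML, where 'a='a] unfolding u_def .
    show "let d = DIM('a); r = r_eta d L \<phi> \<eta>;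
            I = integral (torus_box L :: 'a set) (\<lambda>x. vR R (norm x - r)) in
        C1 d > 0
        \<and> (\<exists>E1 \<epsilon>. I = L ^ d * (-1 + \<phi> * \<eta>) + r powr (real d - 2) * (C1 d + E1) + \<epsilon>
               \<and> \<bar>E1\<bar> \<le> C * exp (- R / C)
               \<and> (if d \<le> 3 then \<bar>\<epsilon>\<bar> \<le> C * exp (- R / C)
                  else \<bar>\<epsilon>\<bar> \<le> C * r powr (real d - 4)))
        \<and> (\<forall>\<alpha>. (1 / L ^ d) * integral (torus_box L :: 'a set) (\<lambda>x. vR R (norm x - r) + \<alpha>) = -1 + \<phi>
               \<longrightarrow> (\<exists>E2 E3. \<alpha> = \<phi> * (1 - \<eta>) - C1 d / L ^ d * r powr (real d - 2) * (1 + E2)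
                                 - E3 / L ^ d
                          \<and> \<bar>E2\<bar> \<le> C * exp (- R / C)
                          \<and> \<bar>E3\<bar> \<le> C * r powr (real d - 4)))"
      unfolding Let_def d_def[symmetric] r_def[symmetric] I_def[symmetric]
    proof (intro conjI allI impI)
      show "C1 d > 0" by (rule C1pos)
      show "\<exists>E1 \<epsilon>. I = L ^ d * (-1 + \<phi> * \<eta>) + r powr (real d - 2) * (C1 d + E1) + \<epsilon>
               \<and> \<bar>E1\<bar> \<le> C * exp (- R / C)
               \<and> (if d \<le> 3 then \<bar>\<epsilon>\<bar> \<le> C * exp (- R / C)
                  else \<bar>\<epsilon>\<bar> \<le> C * r powr (real d - 4))"
        using Iexp E1_C eps_b eps_small by (intro exI[of _ E1] exI[of _ \<epsilon>]) auto
      fix \<alpha> :: real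
      assume ha: "1 / L ^ d * integral (torus_box L :: 'a set) (\<lambda>x. vR R (norm x - r) + \<alpha>) = - 1 + \<phi>"
      have "integral (torus_box L :: 'a set) (\<lambda>x. vR R (norm x - r) + \<alpha>) = I + \<alpha> * L ^ d"
      proof -
        have "integral (torus_box L :: 'a set) (\<lambda>x. vR R (norm x - r) + \<alpha>) = I + integral (torus_box L :: 'a set) (\<lambda>x. \<alpha>)"
          unfolding I_def by (intro integral_add fint) (unfold torus_box_def, rule integrable_const)
        also have "integral (torus_box L :: 'a set) (\<lambda>x. \<alpha>) = \<alpha> * L ^ d"
          using box_content[of L, where 'a='a] L1 by (simp add: torus_box_def d_def)
        finally show ?thesis .
      qed
      then have \<alpha>eq: "\<alpha> = -1 + \<phi> - I / L ^ d" using ha L1 by (simp add: field_simps)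
      show "\<exists>E2 E3. \<alpha> = \<phi> * (1 - \<eta>) - C1 d / L ^ d * r powr (real d - 2) * (1 + E2) - E3 / L ^ d
                          \<and> \<bar>E2\<bar> \<le> C * exp (- R / C) \<and> \<bar>E3\<bar> \<le> C * r powr (real d - 4)"
      proof (rule exI[of _ "E1 / C1 d"], rule exI[of _ \<epsilon>], intro conjI)
        show "\<alpha> = \<phi> * (1 - \<eta>) - C1 d / L ^ d * r powr (real d - 2) * (1 + E1 / C1 d) - \<epsilon> / L ^ d"
          unfolding \<alpha>eq Iexp using C1pos L1 by (simp add: field_simps)
        have "\<bar>E1 / C1 d\<bar> \<le> A / C1 d * exp (- R / 2)"
          using E1_b C1pos by (simp add: abs_divide divide_right_mono)
        also have "\<dots> \<le> C * exp (- R / C)"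
          using C2 A0 C1pos eR by (intro mult_mono) auto
        finally show "\<bar>E1 / C1 d\<bar> \<le> C * exp (- R / C)" .
        show "\<bar>\<epsilon>\<bar> \<le> C * r powr (real d - 4)" by (rule eps_b)
      qed
    qed
  qed
qed


end
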